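(* Let $\psi$ be a formula not containing $\mathbin{\&}$, let $I$ be an interpretation that interprets equality as identity, and let $\sigma$ be an assignment with $\sigma,I\models_P\psi$ and $MFA(\sigma)$. Then there exists an assignment $\sigma^\ddagger\subseteq\sigma$ such that $\sigma^\ddagger,I\models_S\psi^S\mathbin{\&}SFA(\psi)$.
   Context: Fix a set $\mathcal X$ of synchronisation variables and, for each $x\in\mathcal X$, a distinct data flow variable $\hat x$; $\hat{\mathcal X}=\{\hat x: x\in\mathcal X\}$. Fix function symbols $\mathcal F$ and predicate symbols $\mathcal P$ (with arities), $\mathcal P$ containing binary equality $=$; $\mathcal D$ is the set of ground terms over $\mathcal F$. Formulas: $\psi ::= \top \mid x \mid \psi_1\wedge\psi_2 \mid \psi_1\mathbin{\&}\psi_2 \mid \neg\psi \mid p(t_1,\dots,t_n)$, terms $t ::= \hat x \mid f(t_1,\dots,t_n)$. $\mathrm{fv}(\psi)$ is the set of variables of $\mathcal X\cup\hat{\mathcal X}$ occurring in $\psi$; $V(\psi)=\{x\in\mathcal X: x\in\mathrm{fv}(\psi)\text{ or }\hat x\in\mathrm{fv}(\psi)\}$. An assignment $\sigma$ is a partial map sending $x\in\mathcal X$ to $\{\mathrm{true},\mathrm{false}\}$ and $\hat x$ to $\mathcal D$; $\sigma\subseteq\sigma'$ means $\sigma'$ extends $\sigma$. An interpretation $I$ is a partial map from pairs $(p,(d_1,\dots,d_n))$ ($d_i\in\mathcal D$) to $\{\mathrm{true},\mathrm{false}\}$; it interprets equality as identity if $I(=,(d,d'))$ is $\mathrm{true}$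 when $d=d'$ and $\mathrm{false}$ otherwise. $\mathrm{Val}_\sigma(\hat x)=\sigma(\hat x)$, $\mathrm{Val}_\sigma(f(\vec t))=f(\mathrm{Val}_\sigma(t_1),\dots)$, undefined if an argument is. Partial satisfaction $\models_P$ / dissatisfaction $\mathrel{=\!\!|}_P$ (for $\mathbin{\&}$-free formulas): $\models_P\top$ always; $\models_P x$ iff $\sigma(x)=\mathrm{true}$; $\models_P\psi_1\wedge\psi_2$ iff both; $\models_P\neg\psi$ iff $\mathrel{=\!\!|}_P\psi$; $\models_P p(\vec t)$ iff all $\mathrm{Val}_\sigma(t_i)$ defined and $I(p,(\mathrm{Val}_\sigma(t_i))_i)=\mathrm{true}$; $\mathrel{=\!\!|}_P\top$ never; $\mathrel{=\!\!|}_P x$ iff $\sigma(x)=\mathrm{false}$; $\mathrel{=\!\!|}_P\psi_1\wedge\psi_2$ iff one conjunct is dissatisfied; $\mathrel{=\!\!|}_P\neg\psi$ iff $\models_P\psi$; $\mathrel{=\!\!|}_P p(\vec t)$ iff all values defined and $I(\dots)=\mathrm{false}$. $MFA(\sigma)$: for all $x\in\mathcal X$, $\sigma(\hat x)$ defined implies $\sigma(x)=\mathrm{true}$. Simple satisfaction $\models_S$ / dissatisfaction $\mathrel{=\!\!|}_S$ ($\sigma_1\frown\sigma_2$ means they agree on their common domain): $\sigma,I\models_S\top$ iff $\sigma=\emptyset$; $\models_S x$ iff $\sigma=\{x\mapsto\mathrm{true}\}$; $\models_S\psi_1\wedge\psi_2$ iff $\sigma=\sigma_1\cup\sigma_2$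 with $\sigma_1\frown\sigma_2$, $\sigma_i,I\models_S\psi_i$; $\models_S\psi_1\mathbin{\&}\psi_2$ iff $\sigma$ satisfies both; $\models_S\neg\psi$ iff $\mathrel{=\!\!|}_S\psi$; $\models_S p(\vec t)$ iff all values defined, $I(p,\dots)=\mathrm{true}$ and $\mathrm{dom}(\sigma)=\mathrm{fv}(p(\vec t))$. $\mathrel{=\!\!|}_S\top$ never; $\mathrel{=\!\!|}_S x$ iff $\sigma=\{x\mapsto\mathrm{false}\}$; $\sigma,I\mathrel{=\!\!|}_S\psi_1\wedge\psi_2$ iff for all $\sigma_1\frown\sigma_2$ with $\sigma=\sigma_1\cup\sigma_2$, $\sigma_1,I\mathrel{=\!\!|}_S\psi_1$ or $\sigma_2,I\mathrel{=\!\!|}_S\psi_2$; $\mathrel{=\!\!|}_S\psi_1\mathbin{\&}\psi_2$ iff $\sigma$ dissatisfies one; $\mathrel{=\!\!|}_S\neg\psi$ iff $\models_S\psi$; $\mathrel{=\!\!|}_S p(\vec t)$ iff all values defined, $I(\dots)=\mathrm{false}$ and $\mathrm{dom}(\sigma)=\mathrm{fv}(p(\vec t))$. $\psi_1\oplus\psi_2:=\neg(\neg\psi_1\mathbin{\&}\neg\psi_2)$; $SFA(x):=\top\oplus x\oplus\neg x\oplus(x\wedge(\hat x=\hat x))\oplus(\hat x=\hat x)$; $SFA(\psi):=\bigwedge_{x\in V(\psi)}SFA(x)$ (overlapping conjunction; $\top$ if $V(\psi)=\emptyset$). A subformula occurrence is in a negative position if it lies within the scope of an odd number of negations, otherwise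 positive; $\psi^S$ is obtained from $\psi$ by replacing every $\wedge$ in a negative position by $\mathbin{\&}$. *)

theory Defs
  imports Main
begin

(* Synchronisation variables have type 'x; SV x is x, DV x is the data flow variable x-hat. *)
datatype 'x var = SV 'x | DV 'x

(* Terms: TV x stands for the data flow variable x-hat. *)
datatype ('x, 'f) trm = TV 'x | Fn 'f "('x, 'f) trm list"

(* Ground terms over the function symbols (the data domain D, up to arity well-formedness). *)
datatype 'f gterm = GFn 'f "'f gterm list"

datatype 'p psym = EqP | PSym 'p

datatype ('x, 'f, 'p) form =
    Top
  | SVar 'x
  | And "('x, 'f, 'p) form" "('x, 'f, 'p) form"
  | Amp "('x, 'f, 'p) form" "('x, 'f, 'p) form"
  | Neg "('x, 'f, 'p) form"
  | Pred "'p psym" "('x, 'f) trm list"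

datatype 'f val = B bool | D "'f gterm"

type_synonym ('x, 'f) assignment = "'x var \<Rightarrow> 'f val option"
type_synonym ('f, 'p) interp = "'p psym \<times> 'f gterm list \<Rightarrow> bool option"

fun psym_ar :: "('p \<Rightarrow> nat) \<Rightarrow> 'p psym \<Rightarrow> nat" where
  "psym_ar arP EqP = 2"
| "psym_ar arP (PSym p) = arP p"

fun wf_gterm :: "('f \<Rightarrow> nat) \<Rightarrow> 'f gterm \<Rightarrow> bool" where
  "wf_gterm arF (GFn f ds) = (length ds = arF f \<and> (\<forall>d \<in> set ds. wf_gterm arF d))"

fun wf_trm :: "('f \<Rightarrow> nat) \<Rightarrow> ('x, 'f) trm \<Rightarrow> bool" where
  "wf_trm arF (TV x) = True"
| "wf_trm arF (Fn f ts) = (length ts = arF f \<and> (\<forall>t \<in> set ts. wf_trm arF t))"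

fun wf_form :: "('f \<Rightarrow> nat) \<Rightarrow> ('p \<Rightarrow> nat) \<Rightarrow> ('x, 'f, 'p) form \<Rightarrow> bool" where
  "wf_form arF arP Top = True"
| "wf_form arF arP (SVar x) = True"
| "wf_form arF arP (And a b) = (wf_form arF arP a \<and> wf_form arF arP b)"
| "wf_form arF arP (Amp a b) = (wf_form arF arP a \<and> wf_form arF arP b)"
| "wf_form arF arP (Neg a) = wf_form arF arP a"
| "wf_form arF arP (Pred p ts) = (length ts = psym_ar arP p \<and> (\<forall>t \<in> set ts. wf_trm arF t))"

definition wf_assignment :: "('f \<Rightarrow> nat) \<Rightarrow> ('x, 'f) assignment \<Rightarrow> bool" where
  "wf_assignment arF \<sigma> \<longleftrightarrow>
     (\<forall>x. \<sigma> (SV x) = None \<or> (\<exists>b. \<sigma> (SV x) = Some (B b))) \<and>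
     (\<forall>x. \<sigma> (DV x) = None \<or> (\<exists>d. wf_gterm arF d \<and> \<sigma> (DV x) = Some (D d)))"

definition wf_interp :: "('f \<Rightarrow> nat) \<Rightarrow> ('p \<Rightarrow> nat) \<Rightarrow> ('f, 'p) interp \<Rightarrow> bool" where
  "wf_interp arF arP I \<longleftrightarrow>
     (\<forall>p ds. I (p, ds) \<noteq> None \<longrightarrow> length ds = psym_ar arP p \<and> (\<forall>d \<in> set ds. wf_gterm arF d))"

definition eq_identity :: "('f \<Rightarrow> nat) \<Rightarrow> ('f, 'p) interp \<Rightarrow> bool" where
  "eq_identity arF I \<longleftrightarrow>
     (\<forall>d d'. wf_gterm arF d \<and> wf_gterm arF d' \<longrightarrow> I (EqP, [d, d']) = Some (d = d'))"

fun amp_free :: "('x, 'f, 'p) form \<Rightarrow> bool" where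
  "amp_free Top = True"
| "amp_free (SVar x) = True"
| "amp_free (And a b) = (amp_free a \<and> amp_free b)"
| "amp_free (Amp a b) = False"
| "amp_free (Neg a) = amp_free a"
| "amp_free (Pred p ts) = True"

fun fv_trm :: "('x, 'f) trm \<Rightarrow> 'x var set" where
  "fv_trm (TV x) = {DV x}"
| "fv_trm (Fn f ts) = (\<Union>t \<in> set ts. fv_trm t)"

fun fv :: "('x, 'f, 'p) form \<Rightarrow> 'x var set" where
  "fv Top = {}"
| "fv (SVar x) = {SV x}"
| "fv (And a b) = fv a \<union> fv b"
| "fv (Amp a b) = fv a \<union> fv b"
| "fv (Neg a) = fv a"
| "fv (Pred p ts) = (\<Union>t \<in> set ts. fv_trm t)"

definition Vars :: "('x, 'f, 'p) form \<Rightarrow> 'x set" where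
  "Vars \<psi> = {x. SV x \<in> fv \<psi> \<or> DV x \<in> fv \<psi>}"

fun Val :: "('x, 'f) assignment \<Rightarrow> ('x, 'f) trm \<Rightarrow> 'f gterm option" where
  "Val \<sigma> (TV x) = (case \<sigma> (DV x) of Some (D d) \<Rightarrow> Some d | _ \<Rightarrow> None)"
| "Val \<sigma> (Fn f ts) = map_option (GFn f) (those (map (Val \<sigma>) ts))"

(* Partial satisfaction (pol = True) / dissatisfaction (pol = False), for &-free formulas *)
fun psat :: "bool \<Rightarrow> ('x, 'f) assignment \<Rightarrow> ('f, 'p) interp \<Rightarrow> ('x, 'f, 'p) form \<Rightarrow> bool" where
  "psat pol \<sigma> I Top = pol"
| "psat pol \<sigma> I (SVar x) = (\<sigma> (SV x) = Some (B pol))"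
| "psat True \<sigma> I (And a b) = (psat True \<sigma> I a \<and> psat True \<sigma> I b)"
| "psat False \<sigma> I (And a b) = (psat False \<sigma> I a \<or> psat False \<sigma> I b)"
| "psat pol \<sigma> I (Amp a b) = False"  (* not used: partial semantics is only for &-free formulas *)
| "psat pol \<sigma> I (Neg a) = psat (\<not> pol) \<sigma> I a"
| "psat pol \<sigma> I (Pred p ts) =
     (\<exists>ds. those (map (Val \<sigma>) ts) = Some ds \<and> I (p, ds) = Some pol)"

definition MFA :: "('x, 'f) assignment \<Rightarrow> bool" where
  "MFA \<sigma> \<longleftrightarrow> (\<forall>x. \<sigma> (DV x) \<noteq> None \<longrightarrow> \<sigma> (SV x) = Some (B True))"

definition compat :: "('x, 'f) assignment \<Rightarrow> ('x, 'f) assignment \<Rightarrow> bool" where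
  "compat \<sigma>1 \<sigma>2 \<longleftrightarrow> (\<forall>v \<in> dom \<sigma>1 \<inter> dom \<sigma>2. \<sigma>1 v = \<sigma>2 v)"

(* Simple satisfaction (pol = True) / dissatisfaction (pol = False); union of compatible maps is ++ *)
fun ssat :: "bool \<Rightarrow> ('x, 'f) assignment \<Rightarrow> ('f, 'p) interp \<Rightarrow> ('x, 'f, 'p) form \<Rightarrow> bool" where
  "ssat True \<sigma> I Top = (\<sigma> = Map.empty)"
| "ssat False \<sigma> I Top = False"
| "ssat pol \<sigma> I (SVar x) = (\<sigma> = [SV x \<mapsto> B pol])"
| "ssat True \<sigma> I (And a b) =
     (\<exists>\<sigma>1 \<sigma>2. compat \<sigma>1 \<sigma>2 \<and> \<sigma> = \<sigma>1 ++ \<sigma>2 \<and> ssat True \<sigma>1 I a \<and> ssat True \<sigma>2 I b)"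
| "ssat False \<sigma> I (And a b) =
     (\<forall>\<sigma>1 \<sigma>2. compat \<sigma>1 \<sigma>2 \<and> \<sigma> = \<sigma>1 ++ \<sigma>2 \<longrightarrow> ssat False \<sigma>1 I a \<or> ssat False \<sigma>2 I b)"
| "ssat True \<sigma> I (Amp a b) = (ssat True \<sigma> I a \<and> ssat True \<sigma> I b)"
| "ssat False \<sigma> I (Amp a b) = (ssat False \<sigma> I a \<or> ssat False \<sigma> I b)"
| "ssat pol \<sigma> I (Neg a) = ssat (\<not> pol) \<sigma> I a"
| "ssat pol \<sigma> I (Pred p ts) =
     (\<exists>ds. those (map (Val \<sigma>) ts) = Some ds \<and> I (p, ds) = Some pol \<and> dom \<sigma> = fv (Pred p ts))"

definition Oplus :: "('x, 'f, 'p) form \<Rightarrow> ('x, 'f, 'p) form \<Rightarrow> ('x, 'f, 'p) form" where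
  "Oplus a b = Neg (Amp (Neg a) (Neg b))"

(* SFA(x) = T (+) x (+) ~x (+) (x /\ (x^ = x^)) (+) (x^ = x^), (+) read right-associatively *)
definition SFA_var :: "'x \<Rightarrow> ('x, 'f, 'p) form" where
  "SFA_var x = Oplus Top (Oplus (SVar x) (Oplus (Neg (SVar x))
      (Oplus (And (SVar x) (Pred EqP [TV x, TV x])) (Pred EqP [TV x, TV x]))))"

fun bigAnd :: "('x, 'f, 'p) form list \<Rightarrow> ('x, 'f, 'p) form" where
  "bigAnd [] = Top"
| "bigAnd [a] = a"
| "bigAnd (a # as) = And a (bigAnd as)"

(* SFA(psi) = conjunction of SFA(x) over V(psi), in some fixed enumeration of V(psi) *)
definition SFA :: "('x, 'f, 'p) form \<Rightarrow> ('x, 'f, 'p) form" where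
  "SFA \<psi> = bigAnd (map SFA_var (SOME xs. distinct xs \<and> set xs = Vars \<psi>))"

(* psi^S: replace every /\ in a negative position by & ; pos = True means positive position *)
fun toS :: "bool \<Rightarrow> ('x, 'f, 'p) form \<Rightarrow> ('x, 'f, 'p) form" where
  "toS pos Top = Top"
| "toS pos (SVar x) = SVar x"
| "toS pos (And a b) = (if pos then And (toS pos a) (toS pos b) else Amp (toS pos a) (toS pos b))"
| "toS pos (Amp a b) = Amp (toS pos a) (toS pos b)"
| "toS pos (Neg a) = Neg (toS (\<not> pos) a)"
| "toS pos (Pred p ts) = Pred p ts"

definition formS :: "('x, 'f, 'p) form \<Rightarrow> ('x, 'f, 'p) form" where
  "formS \<psi> = toS True \<psi>"

end

theory Submission
  imports Defs
begin

lemma those_map_Some: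
  "those (map g ts) = Some ds \<Longrightarrow> \<forall>t\<in>set ts. \<exists>d. g t = Some d"
  by (induction ts arbitrary: ds) (auto split: option.splits)

lemma Val_fv: "Val \<sigma> t = Some d \<Longrightarrow> fv_trm t \<subseteq> dom \<sigma>"
proof (induction t arbitrary: d)
  case (TV x)
  then show ?case by (auto split: option.splits val.splits)
next
  case (Fn f ts)
  then obtain ds where "those (map (Val \<sigma>) ts) = Some ds" by auto
  then have "\<forall>t\<in>set ts. \<exists>d. Val \<sigma> t = Some d" by (rule those_map_Some)
  then show ?case using Fn.IH by fastforce
qed

lemma Val_restrict: "fv_trm t \<subseteq> A \<Longrightarrow> Val (\<sigma> |` A) t = Val \<sigma> t"
proof (induction t)
  case (TV x)
  then show ?case by auto
next
  case (Fn f ts)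
  then have "map (Val (\<sigma> |` A)) ts = map (Val \<sigma>) ts" by (intro map_cong) auto
  then show ?case by (simp del: map_eq_conv)
qed

lemma main_lemma:
  "amp_free \<psi> \<Longrightarrow> psat pol \<sigma> I \<psi> \<Longrightarrow>
   \<exists>\<sigma>'. \<sigma>' \<subseteq>\<^sub>m \<sigma> \<and> dom \<sigma>' \<subseteq> fv \<psi> \<and> ssat pol \<sigma>' I (toS pol \<psi>)"
proof (induction \<psi> arbitrary: pol)
  case Top
  then show ?case by (cases pol) (auto simp: map_le_def)
next
  case (SVar x)
  then show ?case
    by (cases pol; intro exI[of _ "[SV x \<mapsto> B pol]"]) (auto simp: map_le_def split: if_splits)
next
  case (And a b)
  show ?case
  proof (cases pol)
    case True
    with And obtain s1 s2 where s1: "s1 \<subseteq>\<^sub>m \<sigma>" "dom s1 \<subseteq> fv a" "ssat True s1 I (toS True a)"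
      and s2: "s2 \<subseteq>\<^sub>m \<sigma>" "dom s2 \<subseteq> fv b" "ssat True s2 I (toS True b)" by fastforce
    have c: "compat s1 s2" using s1(1) s2(1) unfolding compat_def map_le_def by force
    have "s1 ++ s2 \<subseteq>\<^sub>m \<sigma>" using s1(1) s2(1) by (simp add: map_add_le_mapI c)
    moreover have "dom (s1 ++ s2) \<subseteq> fv (And a b)" using s1 s2 by auto
    moreover have "ssat pol (s1 ++ s2) I (toS pol (And a b))" using True c s1 s2 by auto
    ultimately show ?thesis by blast
  next
    case False
    with And.prems have "psat False \<sigma> I a \<or> psat False \<sigma> I b" by simp
    then show ?thesis using And False by fastforce
  qed
next
  case (Amp a b)
  then show ?case by simp
next
  case (Neg a)
  then show ?case by fastforce
next
  case (Pred p ts)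
  let ?A = "fv (Pred p ts)"
  from Pred.prems obtain ds where ds: "those (map (Val \<sigma>) ts) = Some ds" "I (p, ds) = Some pol" by auto
  have "\<forall>t\<in>set ts. \<exists>d. Val \<sigma> t = Some d" using ds(1) by (rule those_map_Some)
  then have sub: "?A \<subseteq> dom \<sigma>" using Val_fv by fastforce
  have "map (Val (\<sigma> |` ?A)) ts = map (Val \<sigma>) ts" by (intro map_cong Val_restrict) auto
  then have "ssat pol (\<sigma> |` ?A) I (Pred p ts)" using ds sub by (simp del: map_eq_conv) blast
  moreover have "\<sigma> |` ?A \<subseteq>\<^sub>m \<sigma>" by (auto simp: map_le_def)
  moreover have "dom (\<sigma> |` ?A) \<subseteq> fv (Pred p ts)" by auto
  ultimately show ?case by (metis toS.simps(6))
qed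

lemma ssat_And_True: "ssat True s I (And a b) =
     (\<exists>\<sigma>1 \<sigma>2. compat \<sigma>1 \<sigma>2 \<and> s = \<sigma>1 ++ \<sigma>2 \<and> ssat True \<sigma>1 I a \<and> ssat True \<sigma>2 I b)"
  by simp

lemma ssat_Oplus: "ssat True s I (Oplus a b) = (ssat True s I a \<or> ssat True s I b)"
  by (simp add: Oplus_def)

lemma le_Some: "s \<subseteq>\<^sub>m \<sigma> \<Longrightarrow> s v = Some y \<Longrightarrow> \<sigma> v = Some y"
  unfolding map_le_def by force
lemma wf_le: "wf_assignment arF \<sigma> \<Longrightarrow> s \<subseteq>\<^sub>m \<sigma> \<Longrightarrow> wf_assignment arF s"
  unfolding wf_assignment_def
proof (intro conjI allI)
  fix x assume a: "(\<forall>x. \<sigma> (SV x) = None \<or> (\<exists>b. \<sigma> (SV x) = Some (B b))) \<and>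
    (\<forall>x. \<sigma> (DV x) = None \<or> (\<exists>d. wf_gterm arF d \<and> \<sigma> (DV x) = Some (D d)))" and l: "s \<subseteq>\<^sub>m \<sigma>"
  have a1: "\<sigma> (SV x) = None \<or> (\<exists>b. \<sigma> (SV x) = Some (B b))" using a by blast
  have a2: "\<sigma> (DV x) = None \<or> (\<exists>d. wf_gterm arF d \<and> \<sigma> (DV x) = Some (D d))" using a by blast
  show "s (SV x) = None \<or> (\<exists>b. s (SV x) = Some (B b))"
  proof (cases "s (SV x)")
    case (Some y) then show ?thesis using le_Some[OF l Some] a1 by auto
  qed simp
  show "s (DV x) = None \<or> (\<exists>d. wf_gterm arF d \<and> s (DV x) = Some (D d))"
  proof (cases "s (DV x)")
    case (Some y) then show ?thesis using le_Some[OF l Some] a2 by auto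
  qed simp
qed
definition MFA' :: "('x, 'f) assignment \<Rightarrow> bool" where
  "MFA' s \<longleftrightarrow> (\<forall>x. s (DV x) \<noteq> None \<longrightarrow> s (SV x) \<noteq> None \<longrightarrow> s (SV x) = Some (B True))"
lemma MFA_le: "MFA \<sigma> \<Longrightarrow> s \<subseteq>\<^sub>m \<sigma> \<Longrightarrow> MFA' s"
  unfolding MFA'_def
proof (intro allI impI)
  fix x assume a: "MFA \<sigma>" and l: "s \<subseteq>\<^sub>m \<sigma>"
    and n: "s (DV x) \<noteq> None" and n2: "s (SV x) \<noteq> None"
  then obtain y z where y: "s (DV x) = Some y" and z: "s (SV x) = Some z" by auto
  have "\<sigma> (SV x) = Some (B True)" using a le_Some[OF l y] unfolding MFA_def by auto
  then show "s (SV x) = Some (B True)" using le_Some[OF l z] z by simp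
qed
lemma MFA'_le: assumes a: "MFA' \<sigma>" and l: "s \<subseteq>\<^sub>m \<sigma>" shows "MFA' s"
  unfolding MFA'_def
proof (intro allI impI)
  fix x assume n: "s (DV x) \<noteq> None" and n2: "s (SV x) \<noteq> None"
  then obtain y z where y: "s (DV x) = Some y" and z: "s (SV x) = Some z" by auto
  have "\<sigma> (SV x) = Some (B True)" using a le_Some[OF l y] le_Some[OF l z] unfolding MFA'_def by auto
  then show "s (SV x) = Some (B True)" using le_Some[OF l z] z by simp
qed

lemma SFA_var_sat:
  assumes eq: "eq_identity arF I" and d: "dom s \<subseteq> {SV a, DV a}"
    and wf: "wf_assignment arF s" and m: "MFA' s"
  shows "ssat True s I (SFA_var a)"
proof -
  have sv: "s (SV a) = None \<or> (\<exists>b. s (SV a) = Some (B b))" using wf by (simp add: wf_assignment_def)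
  have dv: "s (DV a) = None \<or> (\<exists>d. wf_gterm arF d \<and> s (DV a) = Some (D d))" using wf by (simp add: wf_assignment_def)
  have oth: "\<And>v. v \<noteq> SV a \<Longrightarrow> v \<noteq> DV a \<Longrightarrow> s v = None" using d by blast
  show ?thesis
  proof (cases "s (DV a)")
    case None
    note N = None
    show ?thesis
    proof (cases "s (SV a)")
      case None
      have "s = Map.empty"
      proof (rule ext)
        fix v show "s v = None"
          using N None oth[of v] by (cases "v = SV a"; cases "v = DV a") auto
      qed
      then show ?thesis unfolding SFA_var_def by (simp add: ssat_Oplus)
    next
      case (Some y)
      then obtain b where b: "s (SV a) = Some (B b)" using sv by auto
      have "s = [SV a \<mapsto> B b]"
      proof (rule ext)
        fix v show "s v = [SV a \<mapsto> B b] v"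
          using N b oth[of v] by (cases "v = SV a"; cases "v = DV a") auto
      qed
      then show ?thesis unfolding SFA_var_def by (cases b) (simp_all add: ssat_Oplus)
    qed
  next
    case (Some y)
    then obtain dd where dd: "wf_gterm arF dd" "s (DV a) = Some (D dd)" using dv by auto
    have I: "I (EqP, [dd, dd]) = Some True" using eq dd(1) by (simp add: eq_identity_def)
    have predsat: "ssat True [DV a \<mapsto> D dd] I (Pred EqP [TV a, TV a])" using I by auto
    show ?thesis
    proof (cases "s (SV a)")
      case None
      have "s = [DV a \<mapsto> D dd]"
      proof (rule ext)
        fix v show "s v = [DV a \<mapsto> D dd] v"
          using None dd oth[of v] by (cases "v = SV a"; cases "v = DV a") auto
      qed
      then show ?thesis unfolding SFA_var_def using predsat by (simp add: ssat_Oplus)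
    next
      case (Some y)
      have T: "s (SV a) = Some (B True)" using m dd Some unfolding MFA'_def by blast
      have e: "s = [SV a \<mapsto> B True] ++ [DV a \<mapsto> D dd]"
      proof (rule ext)
        fix v show "s v = ([SV a \<mapsto> B True] ++ [DV a \<mapsto> D dd]) v"
          using T dd oth[of v] by (cases "v = SV a"; cases "v = DV a") auto
      qed
      have c: "compat [SV a \<mapsto> B True] [DV a \<mapsto> D dd]" by (simp add: compat_def)
      have "ssat True s I (And (SVar a) (Pred EqP [TV a, TV a]))"
        unfolding ssat_And_True
      proof (intro exI conjI)
        show "compat [SV a \<mapsto> B True] [DV a \<mapsto> D dd]" by (rule c)
        show "s = [SV a \<mapsto> B True] ++ [DV a \<mapsto> D dd]" by (rule e)
        show "ssat True [SV a \<mapsto> B True] I (SVar a)" by simp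
        show "ssat True [DV a \<mapsto> D dd] I (Pred EqP [TV a, TV a])" by (rule predsat)
      qed
      then show ?thesis unfolding SFA_var_def by (simp only: ssat_Oplus) blast
    qed
  qed
qed

lemma bigAnd_sat:
  assumes eq: "eq_identity arF I"
  shows "dom s \<subseteq> (\<Union>x\<in>set xs. {SV x, DV x}) \<Longrightarrow> wf_assignment arF s \<Longrightarrow> MFA' s \<Longrightarrow>
    ssat True s I (bigAnd (map SFA_var xs))"
proof (induction xs arbitrary: s rule: induct_list012)
  case 1
  then show ?case by auto
next
  case (2 a)
  then show ?case using SFA_var_sat[OF eq] by simp
next
  case (3 a b rest)
  note IH = 3(2) and pd = 3(3) and pw = 3(4) and pm = 3(5)
  let ?A = "{SV a, DV a}"
  let ?s1 = "s |` ?A" and ?s2 = "s |` (- ?A)"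
  have le1: "?s1 \<subseteq>\<^sub>m s" and le2: "?s2 \<subseteq>\<^sub>m s" by (auto simp: map_le_def)
  have e: "s = ?s1 ++ ?s2" by (auto intro!: ext simp: map_add_def restrict_map_def split: option.splits)
  have c: "compat ?s1 ?s2" by (auto simp: compat_def restrict_map_def)
  have s1: "ssat True ?s1 I (SFA_var a)"
    by (rule SFA_var_sat[OF eq _ wf_le[OF pw le1] MFA'_le[OF pm le1]]) auto
  have "dom ?s2 \<subseteq> (\<Union>x\<in>set (b # rest). {SV x, DV x})" using pd by auto
  then have s2: "ssat True ?s2 I (bigAnd (map SFA_var (b # rest)))"
    using IH wf_le[OF pw le2] MFA'_le[OF pm le2] by blast
  have eq2: "bigAnd (map SFA_var (a # b # rest)) = And (SFA_var a) (bigAnd (map SFA_var (b # rest)))"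
    by simp
  have "ssat True s I (And (SFA_var a) (bigAnd (map SFA_var (b # rest))))"
    unfolding ssat_And_True using e c s1 s2 by blast
  then show ?case by (simp only: eq2)
qed


lemma finite_fv_trm: "finite (fv_trm t)"
  by (induction t) auto

lemma finite_fv: "finite (fv \<psi>)"
  by (induction \<psi>) (auto simp: finite_fv_trm)

lemma finite_Vars: "finite (Vars \<psi>)"
proof -
  have "Vars \<psi> \<subseteq> (\<lambda>v. case v of SV x \<Rightarrow> x | DV x \<Rightarrow> x) ` fv \<psi>"
  proof
    fix x assume "x \<in> Vars \<psi>"
    then have "SV x \<in> fv \<psi> \<or> DV x \<in> fv \<psi>" unfolding Vars_def by simp
    then show "x \<in> (\<lambda>v. case v of SV x \<Rightarrow> x | DV x \<Rightarrow> x) ` fv \<psi>"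
    proof
      assume "SV x \<in> fv \<psi>" then show ?thesis by (rule rev_image_eqI) simp
    next
      assume "DV x \<in> fv \<psi>" then show ?thesis by (rule rev_image_eqI) simp
    qed
  qed
  then show ?thesis using finite_fv finite_surj by blast
qed

theorem mainTheorem6:
  fixes arF :: "'f \<Rightarrow> nat" and arP :: "'p \<Rightarrow> nat"
    and \<psi> :: "('x, 'f, 'p) form" and I :: "('f, 'p) interp" and \<sigma> :: "('x, 'f) assignment"
  assumes "wf_form arF arP \<psi>" and "amp_free \<psi>"
    and "wf_interp arF arP I" and "eq_identity arF I"
    and "wf_assignment arF \<sigma>"
    and "psat True \<sigma> I \<psi>" and "MFA \<sigma>"
  shows "\<exists>\<sigma>'. \<sigma>' \<subseteq>\<^sub>m \<sigma> \<and> ssat True \<sigma>' I (Amp (formS \<psi>) (SFA \<psi>))"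
proof -
  obtain s where s: "s \<subseteq>\<^sub>m \<sigma>" "dom s \<subseteq> fv \<psi>" "ssat True s I (toS True \<psi>)"
    using main_lemma[OF assms(2) assms(6)] by blast
  define xs where "xs = (SOME xs. distinct xs \<and> set xs = Vars \<psi>)"
  have ex: "\<exists>xs. distinct xs \<and> set xs = Vars \<psi>" using finite_distinct_list[OF finite_Vars[of \<psi>]] by auto
  have xs: "set xs = Vars \<psi>" unfolding xs_def using someI_ex[OF ex] by (rule conjunct2)
  have d: "dom s \<subseteq> (\<Union>x\<in>set xs. {SV x, DV x})"
  proof
    fix v assume "v \<in> dom s"
    then have v: "v \<in> fv \<psi>" using s(2) by blast
    show "v \<in> (\<Union>x\<in>set xs. {SV x, DV x})"
    proof (cases v)
      case (SV x) then show ?thesis using v xs unfolding Vars_def by auto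
    next
      case (DV x) then show ?thesis using v xs unfolding Vars_def by auto
    qed
  qed
  have "ssat True s I (SFA \<psi>)"
    unfolding SFA_def xs_def[symmetric]
    by (rule bigAnd_sat[OF assms(4) d wf_le[OF assms(5) s(1)] MFA_le[OF assms(7) s(1)]])
  then have "ssat True s I (Amp (formS \<psi>) (SFA \<psi>))" using s(3) by (simp add: formS_def)
  then show ?thesis using s(1) by blast
qed

end
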